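(* In the standing setting below, the cost function $c$ satisfies Loeper's property if and only if the following holds: for all $X_i=(x_i,u_i)\in\mathbb{X}\times\mathbb{R}$ ($i=0,1$), all $y\in\mathbb{Y}$ and $h\in\mathbb{R}$ with $-c(x_i,y)+h=u_i$ for $i=0,1$, and every point $x_t$ of the $c$-segment with respect to $y$ from $x_0$ to $x_1$, one has $F_{X_0X_1}(x_t)=-c(x_t,y)+h$.
   Context: Standing setting: $\mathbb{X},\mathbb{Y}\subset\mathbb{R}^n$ are compact with non-empty interior; $c:\mathbb{X}\times\mathbb{Y}\to\mathbb{R}$ has continuous $D_xc$, $D_yc$, and continuous mixed second derivatives with $D^2_{xy}c=(D^2_{yx}c)^T$; for each $x$ the map $y\mapsto -D_xc(x,y)$ is injective on $\mathbb{Y}$ and for each $y$ the map $x\mapsto -D_yc(x,y)$ is injective on $\mathbb{X}$; $D^2_{xy}c(x,y)$ is invertible everywhere; for every $y$ the set $[\mathbb{X}]_y=\{-D_yc(x,y):x\in\mathbb{X}\}$ is convex and for every $x$ the set $[\mathbb{Y}]_x=\{-D_xc(x,y):y\in\mathbb{Y}\}$ is convex. $\exp^c_y:[\mathbb{X}]_y\to\mathbb{X}$ is the inverse of $x\mapsto -D_yc(x,y)$. For $x_0,x_1\in\mathbb{X}$, $y\in\mathbb{Y}$, $p_i=-D_yc(x_i,y)$, the $c$-segment with respect to $y$ from $x_0$ to $x_1$ is $\{x_t=\exp^c_y(tp_1+(1-t)p_0):t\in[0,1]\}$. Loeper's property: for all $x_0,x_1\in\mathbb{X}$, $y_0,y\in\mathbb{Y}$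 and every $x_t$ on the $c$-segment with respect to $y_0$ from $x_0$ to $x_1$, $-c(x_t,y)+c(x_t,y_0)\le\max\{-c(x_i,y)+c(x_i,y_0):i=0,1\}$. $c$-chord: for $X_i=(x_i,u_i)\in\mathbb{X}\times\mathbb{R}$, $F_{X_0X_1}(x)=\sup\{-c(x,y)+h: y\in\mathbb{Y},h\in\mathbb{R},-c(x_i,y)+h\le u_i, i=0,1\}$. *)

theory Defs
  imports "HOL-Analysis.Analysis"
begin

text \<open>Ambient space R^n is modelled by a Euclidean space type 'a.
  Dx x y and Dy x y are the gradients D_x c(x,y), D_y c(x,y).\<close>

definition cexp :: "'a set \<Rightarrow> ('a \<Rightarrow> 'a \<Rightarrow> 'a) \<Rightarrow> 'a \<Rightarrow> 'a \<Rightarrow> 'a::euclidean_space" where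
  "cexp X Dy y p = the_inv_into X (\<lambda>x. - Dy x y) p"

definition cseg_pt :: "'a set \<Rightarrow> ('a \<Rightarrow> 'a \<Rightarrow> 'a) \<Rightarrow> 'a \<Rightarrow> 'a \<Rightarrow> 'a \<Rightarrow> real \<Rightarrow> 'a::euclidean_space" where
  "cseg_pt X Dy y x0 x1 t = cexp X Dy y (t *\<^sub>R (- Dy x1 y) + (1 - t) *\<^sub>R (- Dy x0 y))"

definition c_segment :: "'a set \<Rightarrow> ('a \<Rightarrow> 'a \<Rightarrow> 'a) \<Rightarrow> 'a \<Rightarrow> 'a \<Rightarrow> 'a \<Rightarrow> 'a::euclidean_space set" where
  "c_segment X Dy y x0 x1 = (\<lambda>t. cseg_pt X Dy y x0 x1 t) ` {0..1}"

definition loeper :: "'a::euclidean_space set \<Rightarrow> 'a set \<Rightarrow> ('a \<Rightarrow> 'a \<Rightarrow> real) \<Rightarrow> ('a \<Rightarrow> 'a \<Rightarrow> 'a) \<Rightarrow> bool" where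
  "loeper X Y c Dy \<longleftrightarrow>
     (\<forall>x0\<in>X. \<forall>x1\<in>X. \<forall>y0\<in>Y. \<forall>y\<in>Y. \<forall>xt\<in>c_segment X Dy y0 x0 x1.
        - c xt y + c xt y0 \<le> max (- c x0 y + c x0 y0) (- c x1 y + c x1 y0))"

definition c_chord :: "'a::euclidean_space set \<Rightarrow> ('a \<Rightarrow> 'a \<Rightarrow> real) \<Rightarrow> 'a \<times> real \<Rightarrow> 'a \<times> real \<Rightarrow> 'a \<Rightarrow> real" where
  "c_chord Y c X0 X1 x = Sup {- c x y + h | y h. y \<in> Y \<and>
       - c (fst X0) y + h \<le> snd X0 \<and> - c (fst X1) y + h \<le> snd X1}"

end

theory Submission
  imports Defs
begin

theorem proposition3p9:
  fixes X Y :: "'a::euclidean_space set"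
    and c :: "'a \<Rightarrow> 'a \<Rightarrow> real"
    and Dx Dy :: "'a \<Rightarrow> 'a \<Rightarrow> 'a"
    and Dxy Dyx :: "'a \<Rightarrow> 'a \<Rightarrow> 'a \<Rightarrow>\<^sub>L 'a"
  assumes "compact X" "interior X \<noteq> {}" "compact Y" "interior Y \<noteq> {}"
    and Dx: "\<And>x y. x \<in> X \<Longrightarrow> y \<in> Y \<Longrightarrow>
               ((\<lambda>x'. c x' y) has_derivative (\<lambda>v. Dx x y \<bullet> v)) (at x within X)"
    and Dy: "\<And>x y. x \<in> X \<Longrightarrow> y \<in> Y \<Longrightarrow>
               ((\<lambda>y'. c x y') has_derivative (\<lambda>v. Dy x y \<bullet> v)) (at y within Y)"
    and "continuous_on (X \<times> Y) (\<lambda>(x, y). Dx x y)"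
    and "continuous_on (X \<times> Y) (\<lambda>(x, y). Dy x y)"
    and Dxy: "\<And>x y. x \<in> X \<Longrightarrow> y \<in> Y \<Longrightarrow>
               ((\<lambda>y'. Dx x y') has_derivative blinfun_apply (Dxy x y)) (at y within Y)"
    and Dyx: "\<And>x y. x \<in> X \<Longrightarrow> y \<in> Y \<Longrightarrow>
               ((\<lambda>x'. Dy x' y) has_derivative blinfun_apply (Dyx x y)) (at x within X)"
    and "continuous_on (X \<times> Y) (\<lambda>(x, y). Dxy x y)"
    and "continuous_on (X \<times> Y) (\<lambda>(x, y). Dyx x y)"
    and transp: "\<And>x y u v. x \<in> X \<Longrightarrow> y \<in> Y \<Longrightarrow>
               blinfun_apply (Dxy x y) u \<bullet> v = u \<bullet> blinfun_apply (Dyx x y) v"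
    and "\<And>x. x \<in> X \<Longrightarrow> inj_on (\<lambda>y. - Dx x y) Y"
    and "\<And>y. y \<in> Y \<Longrightarrow> inj_on (\<lambda>x. - Dy x y) X"
    and "\<And>x y. x \<in> X \<Longrightarrow> y \<in> Y \<Longrightarrow> bij (blinfun_apply (Dxy x y))"
    and "\<And>y. y \<in> Y \<Longrightarrow> convex ((\<lambda>x. - Dy x y) ` X)"
    and "\<And>x. x \<in> X \<Longrightarrow> convex ((\<lambda>y. - Dx x y) ` Y)"
  shows "loeper X Y c Dy \<longleftrightarrow>
     (\<forall>x0\<in>X. \<forall>x1\<in>X. \<forall>u0 u1::real. \<forall>y\<in>Y. \<forall>h::real.
        (- c x0 y + h = u0 \<and> - c x1 y + h = u1) \<longrightarrow>
        (\<forall>xt\<in>c_segment X Dy y x0 x1. c_chord Y c (x0, u0) (x1, u1) xt = - c xt y + h))"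
proof -
  have segX: "xt \<in> X" if H: "x0 \<in> X" "x1 \<in> X" "y0 \<in> Y" "xt \<in> c_segment X Dy y0 x0 x1" for x0 x1 y0 xt
  proof -
    obtain t where t: "t \<in> {0..1}" "xt = cseg_pt X Dy y0 x0 x1 t"
      using H(4) unfolding c_segment_def by auto
    let ?f = "\<lambda>x. - Dy x y0"
    have "t *\<^sub>R ?f x1 + (1 - t) *\<^sub>R ?f x0 \<in> ?f ` X"
      using t(1) H assms(17)[OF H(3)]
      by (intro convexD) auto
    moreover have "inj_on ?f X" using assms(15)[OF H(3)] .
    ultimately show ?thesis unfolding t(2) cseg_pt_def cexp_def
      by (metis the_inv_into_into order_refl)
  qed
  have contc: "continuous_on Y (c x)" if "x \<in> X" for x
  proof -
    have "\<And>y. y \<in> Y \<Longrightarrow> continuous (at y within Y) (c x)"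
      using Dy[OF that] has_derivative_continuous by blast
    then show ?thesis using continuous_on_eq_continuous_within by blast
  qed
  show ?thesis
  proof
    assume L: "loeper X Y c Dy"
    show "\<forall>x0\<in>X. \<forall>x1\<in>X. \<forall>u0 u1::real. \<forall>y\<in>Y. \<forall>h::real.
        (- c x0 y + h = u0 \<and> - c x1 y + h = u1) \<longrightarrow>
        (\<forall>xt\<in>c_segment X Dy y x0 x1. c_chord Y c (x0, u0) (x1, u1) xt = - c xt y + h)"
    proof (intro ballI allI impI)
      fix x0 x1 u0 u1 y h xt
      assume x0: "x0 \<in> X" and x1: "x1 \<in> X" and y: "y \<in> Y"
        and u: "- c x0 y + h = u0 \<and> - c x1 y + h = u1"
        and xt: "xt \<in> c_segment X Dy y x0 x1"
      let ?S = "{- c xt y' + h' | y' h'. y' \<in> Y \<and>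
       - c (fst (x0,u0)) y' + h' \<le> snd (x0,u0) \<and> - c (fst (x1,u1)) y' + h' \<le> snd (x1,u1)}"
      have mem: "- c xt y + h \<in> ?S" using y u by auto
      have le: "z \<le> - c xt y + h" if zS: "z \<in> ?S" for z
      proof -
        obtain y' h' where z: "z = - c xt y' + h'" "y' \<in> Y"
          "- c x0 y' + h' \<le> u0" "- c x1 y' + h' \<le> u1" using zS unfolding mem_Collect_eq fst_conv snd_conv by blast
        have "- c xt y' + c xt y \<le> max (- c x0 y' + c x0 y) (- c x1 y' + c x1 y)"
          using L[unfolded loeper_def, rule_format, OF x0 x1 y z(2) xt] .
        then show ?thesis using z u by (auto simp: max_def split: if_splits)
      qed
      show "c_chord Y c (x0, u0) (x1, u1) xt = - c xt y + h"
        unfolding c_chord_def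
        by (rule cSup_eq_maximum[OF mem]) (use le in blast)
    qed
  next
    assume R: "\<forall>x0\<in>X. \<forall>x1\<in>X. \<forall>u0 u1::real. \<forall>y\<in>Y. \<forall>h::real.
        (- c x0 y + h = u0 \<and> - c x1 y + h = u1) \<longrightarrow>
        (\<forall>xt\<in>c_segment X Dy y x0 x1. c_chord Y c (x0, u0) (x1, u1) xt = - c xt y + h)"
    show "loeper X Y c Dy"
      unfolding loeper_def
    proof (intro ballI)
      fix x0 x1 y0 y xt
      assume x0: "x0 \<in> X" and x1: "x1 \<in> X" and y0: "y0 \<in> Y" and y: "y \<in> Y"
        and xt: "xt \<in> c_segment X Dy y0 x0 x1"
      have xtX: "xt \<in> X" using segX[OF x0 x1 y0 xt] .
      define u0 where "u0 = - c x0 y0"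
      define u1 where "u1 = - c x1 y0"
      have ch: "c_chord Y c (x0, u0) (x1, u1) xt = - c xt y0"
        using R x0 x1 y0 xt unfolding u0_def u1_def
        by (metis add.right_neutral)
      let ?S = "{- c xt y' + h' | y' h'. y' \<in> Y \<and>
       - c (fst (x0,u0)) y' + h' \<le> snd (x0,u0) \<and> - c (fst (x1,u1)) y' + h' \<le> snd (x1,u1)}"
      define M where "M = max (- c x0 y + c x0 y0) (- c x1 y + c x1 y0)"
      have m0: "- c x0 y + (- M) \<le> u0" "- c x1 y + (- M) \<le> u1"
        unfolding M_def u0_def u1_def by linarith+
      have mem: "- c xt y - M \<in> ?S"
        unfolding mem_Collect_eq fst_conv snd_conv
        by (rule exI[of _ y], rule exI[of _ "- M"]) (use y m0 in simp)
      have "continuous_on Y (\<lambda>y'. - c xt y' + c x0 y' + u0)"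
        using contc[OF xtX] contc[OF x0] by (intro continuous_intros) auto
      then have "compact ((\<lambda>y'. - c xt y' + c x0 y' + u0) ` Y)"
        using assms(3) compact_continuous_image by blast
      then have "bounded ((\<lambda>y'. - c xt y' + c x0 y' + u0) ` Y)"
        by (rule compact_imp_bounded)
      then obtain B where "\<forall>z\<in>(\<lambda>y'. - c xt y' + c x0 y' + u0) ` Y. \<bar>z\<bar> \<le> B"
        unfolding bounded_real by blast
      then have B: "\<And>y'. y' \<in> Y \<Longrightarrow> - c xt y' + c x0 y' + u0 \<le> B"
        by fastforce
      have bdd: "bdd_above ?S"
      proof (rule bdd_aboveI)
        fix z assume "z \<in> ?S"
        obtain y' h' where z: "z = - c xt y' + h'" "y' \<in> Y"
          "- c x0 y' + h' \<le> u0" using \<open>z \<in> ?S\<close> unfolding mem_Collect_eq fst_conv snd_conv by blast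
        show "z \<le> B" using B[OF z(2)] z by linarith
      qed
      have "- c xt y - M \<le> Sup ?S" by (rule cSup_upper[OF mem bdd])
      then have "- c xt y - M \<le> - c xt y0" using ch unfolding c_chord_def by simp
      then show "- c xt y + c xt y0 \<le> max (- c x0 y + c x0 y0) (- c x1 y + c x1 y0)"
        unfolding M_def by linarith
    qed
  qed
qed

end
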